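(* Let $W,V$ be subspaces of $\mathbb{C}^n$ with $\mathbb{C}^n=W\oplus V^\perp$, let $\{\mathbf{w}_i\}_{i=1}^N$ be a frame for $W$ with frame operator $\mathbf{S}=\sum_{i=1}^N\mathbf{w}_i\mathbf{w}_i^*$, and let $\{\mathbf{v}_i\}_{i=1}^N$ be an oblique dual frame of $\{\mathbf{w}_i\}_{i=1}^N$ on $V$. Then $$\sum_{i=1}^N\sum_{j=1}^N|\langle\mathbf{w}_i,\mathbf{v}_j\rangle|^2\ge d_W,$$ where $d_W=\dim W$, and equality holds if and only if $\mathbf{v}_j=\boldsymbol{\pi}_{VW^\perp}\mathbf{S}^\dagger\mathbf{w}_j$ for every $j=1,\dots,N$.
   Context: The inner product on $\mathbb{C}^n$ is $\langle\mathbf{x},\mathbf{y}\rangle=\mathbf{y}^*\mathbf{x}$. $\mathbf{S}^\dagger$ is the Moore–Penrose inverse. When $\mathbb{C}^n=W\oplus V^\perp$ (equivalently $\mathbb{C}^n=V\oplus W^\perp$), $\boldsymbol{\pi}_{WV^\perp}$ is the oblique projection onto $W$ along $V^\perp$ and $\boldsymbol{\pi}_{VW^\perp}$ is the oblique projection onto $V$ along $W^\perp$. A finite family $\{\mathbf{w}_i\}_{i=1}^N\subset W$ is a frame for $W$ if it spans $W$. A frame $\{\mathbf{v}_i\}_{i=1}^N\subset V$ for $V$ is an oblique dual frame of $\{\mathbf{w}_i\}$ on $V$ if $\boldsymbol{\pi}_{WV^\perp}\mathbf{f}=\sum_{i=1}^N\langle\mathbf{f},\mathbf{v}_i\rangle\mathbf{w}_i$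 for all $\mathbf{f}\in\mathbb{C}^n$. *)

theory Defs
  imports "HOL-Analysis.Analysis"
begin

text \<open>Vectors of C^n are modelled as \<open>complex ^ 'n\<close> ('n a finite index type with n elements).
Complex-linear notions (subspace, span, dim) come from the interpretation \<open>vec\<close> of
\<open>vector_space (*s)\<close> in Cartesian_Space.\<close>

definition cinner :: "complex ^ 'n \<Rightarrow> complex ^ 'n \<Rightarrow> complex" where
  "cinner x y = (\<Sum>i\<in>UNIV. x $ i * cnj (y $ i))"

definition corth :: "(complex ^ 'n) set \<Rightarrow> (complex ^ 'n) set" where
  "corth V = {x. \<forall>v\<in>V. cinner x v = 0}"

definition direct_sum_univ :: "(complex ^ 'n) set \<Rightarrow> (complex ^ 'n) set \<Rightarrow> bool" where
  "direct_sum_univ A B \<longleftrightarrow> A \<inter> B = {0} \<and> (\<forall>f. \<exists>a\<in>A. \<exists>b\<in>B. f = a + b)"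

text \<open>Oblique projection onto A along B (meaningful when C^n = A (+) B).\<close>
definition oblique_proj :: "(complex ^ 'n) set \<Rightarrow> (complex ^ 'n) set \<Rightarrow> complex ^ 'n \<Rightarrow> complex ^ 'n" where
  "oblique_proj A B f = (THE a. a \<in> A \<and> f - a \<in> B)"

definition cadjoint :: "complex ^ 'n ^ 'm \<Rightarrow> complex ^ 'm ^ 'n" where
  "cadjoint A = (\<chi> i j. cnj (A $ j $ i))"

definition outer :: "complex ^ 'n \<Rightarrow> complex ^ 'n \<Rightarrow> complex ^ 'n ^ 'n" where
  "outer x y = (\<chi> i j. x $ i * cnj (y $ j))"

definition moore_penrose :: "complex ^ 'n ^ 'm \<Rightarrow> complex ^ 'm ^ 'n" where
  "moore_penrose A = (THE X. A ** X ** A = A \<and> X ** A ** X = X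
      \<and> cadjoint (A ** X) = A ** X \<and> cadjoint (X ** A) = X ** A)"

definition is_frame :: "(nat \<Rightarrow> complex ^ 'n) \<Rightarrow> nat \<Rightarrow> (complex ^ 'n) set \<Rightarrow> bool" where
  "is_frame w N W \<longleftrightarrow> (\<forall>i\<in>{1..N}. w i \<in> W) \<and> vec.span (w ` {1..N}) = W"

definition frame_operator :: "(nat \<Rightarrow> complex ^ 'n) \<Rightarrow> nat \<Rightarrow> complex ^ 'n ^ 'n" where
  "frame_operator w N = (\<Sum>i\<in>{1..N}. outer (w i) (w i))"

definition oblique_dual_frame ::
  "(nat \<Rightarrow> complex ^ 'n) \<Rightarrow> (nat \<Rightarrow> complex ^ 'n) \<Rightarrow> nat \<Rightarrow> (complex ^ 'n) set \<Rightarrow> (complex ^ 'n) set \<Rightarrow> bool" where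
  "oblique_dual_frame v w N W V \<longleftrightarrow> is_frame v N V \<and>
     (\<forall>f. oblique_proj W (corth V) f = (\<Sum>i\<in>{1..N}. cinner f (v i) *s w i))"

end

theory Submission
  imports Defs
begin


lemma cinner_add_left: "cinner (x + y) z = cinner x z + cinner y z"
  by (simp add: cinner_def distrib_right sum.distrib)
lemma cinner_add_right: "cinner x (y + z) = cinner x y + cinner x z"
  by (simp add: cinner_def distrib_left sum.distrib)
lemma cinner_diff_left: "cinner (x - y) z = cinner x z - cinner y z"
  by (simp add: cinner_def left_diff_distrib sum_subtractf)
lemma cinner_diff_right: "cinner x (y - z) = cinner x y - cinner x z"
  by (simp add: cinner_def right_diff_distrib sum_subtractf)
lemma cinner_scale_left: "cinner (c *s x) y = c * cinner x y"
  by (simp add: cinner_def sum_distrib_left mult.assoc)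
lemma cinner_scale_right: "cinner x (c *s y) = cnj c * cinner x y"
  by (simp add: cinner_def sum_distrib_left ac_simps)
lemma cinner_zero_left[simp]: "cinner 0 y = 0"
  by (simp add: cinner_def)
lemma cinner_zero_right[simp]: "cinner x 0 = 0"
  by (simp add: cinner_def)
lemma cinner_sum_left: "cinner (sum f A) y = (\<Sum>a\<in>A. cinner (f a) y)"
  by (simp add: cinner_def sum_distrib_right sum.swap[of _ A])
lemma cinner_sum_right: "cinner x (sum f A) = (\<Sum>a\<in>A. cinner x (f a))"
  by (simp add: cinner_def sum_distrib_left sum.swap[of _ A])
lemma cinner_commute: "cinner y x = cnj (cinner x y)"
  by (simp add: cinner_def mult.commute)
lemma cinner_self: "cinner x x = of_real (\<Sum>i\<in>UNIV. (cmod (x $ i))\<^sup>2)"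
  by (simp only: cinner_def of_real_sum complex_norm_square)
lemma cinner_self_eq_0[simp]: "cinner x x = 0 \<longleftrightarrow> x = 0"
proof
  assume "cinner x x = 0"
  then have "(\<Sum>i\<in>UNIV. (cmod (x $ i))\<^sup>2) = 0" by (simp only: cinner_self of_real_eq_0_iff)
  then have "\<forall>i\<in>UNIV. (cmod (x $ i))\<^sup>2 = 0"
    by (subst sum_nonneg_eq_0_iff[symmetric]) auto
  then show "x = 0" by (simp add: vec_eq_iff)
qed simp

lemma cinner_ext: "(\<And>x. cinner x a = cinner x b) \<Longrightarrow> a = b"
  by (metis cinner_diff_right cinner_self_eq_0 eq_iff_diff_eq_0)

lemma sum_mv: "(sum F S) *v f = (\<Sum>x\<in>S. F x *v f)"
  by (induct S rule: infinite_finite_induct) (simp_all add: matrix_vector_mult_add_rdistrib)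
lemma mv_sum: "A *v sum f S = (\<Sum>x\<in>S. A *v f x)"
  by (induct S rule: infinite_finite_induct) (simp_all add: matrix_vector_right_distrib)
lemma mv_scale: "A *v (c *s x) = c *s (A *v (x::complex^'n))"
  by (simp add: vec_eq_iff matrix_vector_mult_def vector_scalar_mult_def sum_distrib_left mult_ac)
lemma outer_mv: "outer x y *v f = cinner f y *s x"
  unfolding vec_eq_iff outer_def matrix_vector_mult_def cinner_def vector_scalar_mult_def
  by (simp add: sum_distrib_left mult_ac)
lemma cadjoint_mult: "cadjoint (A ** B) = cadjoint B ** cadjoint (A :: complex^'n^'m)"
  unfolding vec_eq_iff cadjoint_def matrix_matrix_mult_def by (simp add: mult.commute)
lemma cadjoint_cadjoint[simp]: "cadjoint (cadjoint A) = A"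
  by (simp add: vec_eq_iff cadjoint_def)
lemma cinner_adj: "cinner (A *v x) y = cinner x (cadjoint A *v y)"
proof -
  have "cinner (A *v x) y = (\<Sum>i\<in>UNIV. \<Sum>j\<in>UNIV. A$i$j * x$j * cnj(y$i))"
    by (simp add: cinner_def matrix_vector_mult_def sum_distrib_right)
  also have "\<dots> = (\<Sum>j\<in>UNIV. \<Sum>i\<in>UNIV. A$i$j * x$j * cnj(y$i))"
    by (rule sum.swap)
  also have "\<dots> = cinner x (cadjoint A *v y)"
    by (simp add: cinner_def cadjoint_def matrix_vector_mult_def sum_distrib_left mult_ac)
  finally show ?thesis .
qed
lemma frame_op_mv: "frame_operator w N *v f = (\<Sum>i\<in>{1..N}. cinner f (w i) *s w i)"
  by (simp add: frame_operator_def sum_mv outer_mv)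
lemma cinner_adj2: "cinner x (A *v y) = cinner (cadjoint A *v x) y"
  using cinner_adj[of "cadjoint A" x y] by simp
lemma hermitian_I: 
  assumes "\<And>x y. cinner (A *v x) y = cinner x (A *v y)" shows "cadjoint A = A"
proof -
  have "cadjoint A *v y = A *v y" for y
    by (rule cinner_ext) (simp add: cinner_adj[symmetric] assms)
  then show ?thesis by (simp add: matrix_eq)
qed

lemma mp_unique:
  fixes A :: "complex^'n^'m"
  assumes "A ** X ** A = A" "X ** A ** X = X" "cadjoint (A ** X) = A ** X" "cadjoint (X ** A) = X ** A"
    and "A ** Y ** A = A" "Y ** A ** Y = Y" "cadjoint (A ** Y) = A ** Y" "cadjoint (Y ** A) = Y ** A"
  shows "X = Y"
proof -
  have "X = X ** (A ** X)" using assms(2) by (simp only: matrix_mul_assoc)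
  also have "\<dots> = X ** cadjoint (A ** X)" using assms(3) by (simp only:)
  also have "\<dots> = X ** cadjoint X ** cadjoint (A ** Y ** A)"
    by (simp only: cadjoint_mult assms(5) matrix_mul_assoc)
  also have "\<dots> = X ** (cadjoint (A ** X) ** cadjoint (A ** Y))"
    by (simp only: cadjoint_mult matrix_mul_assoc)
  also have "\<dots> = (X ** A ** X) ** A ** Y" using assms(3,7)
    by (simp only: matrix_mul_assoc)
  also have "\<dots> = X ** A ** Y" using assms(2) by (simp only:)
  finally have 1: "X = X ** A ** Y" .
  have "Y = (Y ** A) ** Y" using assms(6) by (simp only:)
  also have "\<dots> = cadjoint (Y ** A) ** Y" using assms(8) by (simp only:)
  also have "\<dots> = cadjoint (A ** X ** A) ** cadjoint Y ** Y"
    by (simp only: cadjoint_mult assms(1))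
  also have "\<dots> = (cadjoint (X ** A) ** cadjoint (Y ** A)) ** Y"
    by (simp only: cadjoint_mult matrix_mul_assoc)
  also have "\<dots> = X ** A ** (Y ** A ** Y)" using assms(4,8)
    by (simp only: matrix_mul_assoc)
  also have "\<dots> = X ** A ** Y" using assms(6) by (simp only:)
  finally show ?thesis using 1 by simp
qed

lemma mp_eq:
  fixes A :: "complex^'n^'m"
  assumes "A ** X ** A = A" "X ** A ** X = X" "cadjoint (A ** X) = A ** X" "cadjoint (X ** A) = X ** A"
  shows "moore_penrose A = X"
  unfolding moore_penrose_def
  by (rule the_equality) (use assms mp_unique in blast)+



lemma orth_span:
  assumes "\<And>b. b \<in> B \<Longrightarrow> cinner u b = 0" and "x \<in> vec.span B"
  shows "cinner u x = 0"
  using assms(2)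
proof (induct rule: vec.span_induct_alt)
  case base then show ?case by simp
next
  case (step c x y) then show ?case by (simp add: cinner_add_right cinner_scale_right assms(1))
qed

definition orthonormal :: "(complex^'n) set \<Rightarrow> bool" where
  "orthonormal B \<longleftrightarrow> (\<forall>b\<in>B. cinner b b = 1) \<and> (\<forall>b\<in>B. \<forall>c\<in>B. b \<noteq> c \<longrightarrow> cinner b c = 0)"

lemma ortho_coeff:
  assumes "orthonormal B" "finite B" "b \<in> B"
  shows "cinner (\<Sum>u\<in>B. c u *s u) b = c b"
proof -
  have "cinner (\<Sum>u\<in>B. c u *s u) b = (\<Sum>u\<in>B. c u * cinner u b)"
    by (simp add: cinner_sum_left cinner_scale_left)
  also have "\<dots> = (\<Sum>u\<in>B. if u = b then c u else 0)"
    using assms(1,3) unfolding orthonormal_def by (intro sum.cong) auto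
  also have "\<dots> = c b" using assms(2,3) by simp
  finally show ?thesis .
qed

lemma orthonormal_independent:
  assumes "orthonormal B" "finite B"
  shows "vec.independent B"
  unfolding vec.independent_explicit
proof (intro conjI allI impI ballI)
  fix c v assume "(\<Sum>v\<in>B. c v *s v) = 0" "v \<in> B"
  then show "c v = 0" using ortho_coeff[OF assms, of v c] by simp
qed (rule assms(2))

lemma orthonormal_expand:
  assumes "orthonormal B" "finite B" "x \<in> vec.span B"
  shows "x = (\<Sum>b\<in>B. cinner x b *s b)"
proof -
  from assms(3) obtain c where x: "x = (\<Sum>v\<in>B. c v *s v)"
    using vec.span_finite[OF assms(2)] by auto
  have "cinner x b = c b" if "b \<in> B" for b
    unfolding x by (rule ortho_coeff[OF assms(1,2) that])
  then show ?thesis using x by simp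
qed

lemma gram_schmidt:
  fixes A :: "(complex^'n) set"
  assumes "finite A"
  shows "\<exists>B. finite B \<and> orthonormal B \<and> vec.span B = vec.span A"
  using assms
proof (induct A rule: finite_induct)
  case empty
  show ?case by (intro exI[of _ "{}"]) (simp add: orthonormal_def)
next
  case (insert x A)
  then obtain B where B: "finite B" "orthonormal B" "vec.span B = vec.span A" by blast
  define s where "s = (\<Sum>b\<in>B. cinner x b *s b)"
  define y where "y = x - s"
  have s_span: "s \<in> vec.span B" unfolding s_def
    by (intro vec.span_sum vec.span_scale vec.span_base)
  have y_orth: "cinner y c = 0" if "c \<in> B" for c
    unfolding y_def s_def cinner_diff_left using ortho_coeff[OF B(2,1) that, of "\<lambda>b. cinner x b"]
    by simp
  show ?case
  proof (cases "y = 0")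
    case True
    then have "x \<in> vec.span A" using s_span B(3) by (simp add: y_def)
    then have "vec.span (insert x A) = vec.span A" by (rule vec.span_redundant)
    then show ?thesis using B by auto
  next
    case False
    define t where "t = Re (cinner y y)"
    have yy: "cinner y y = of_real t" unfolding t_def by (simp add: cinner_self)
    have "t \<noteq> 0" using False yy by auto
    moreover have "t \<ge> 0" unfolding t_def by (simp add: cinner_self sum_nonneg)
    ultimately have tpos: "t > 0" by simp
    define r where "r = complex_of_real (sqrt t)"
    have r0: "r \<noteq> 0" using tpos by (simp add: r_def)
    define e where "e = (1 / r) *s y"
    have cr: "cnj r = r" by (simp add: r_def)
    have rr: "r * r = of_real t" using tpos by (simp add: r_def flip: of_real_mult)
    have ee: "cinner e e = 1"
    proof -
      have "cinner e e = (1 / r) * (1 / r) * cinner y y"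
        unfolding e_def cinner_scale_left cinner_scale_right cr by (simp add: cr)
      also have "\<dots> = 1" using rr r0 yy tpos by (simp add: field_simps)
      finally show ?thesis .
    qed
    have e_orth: "cinner e c = 0" if "c \<in> B" for c
      unfolding e_def cinner_scale_left using y_orth[OF that] by simp
    have eB: "e \<notin> B" using e_orth ee by force
    have ON: "orthonormal (insert e B)"
      unfolding orthonormal_def
    proof (intro conjI ballI impI)
      fix b assume "b \<in> insert e B" then show "cinner b b = 1"
        using B(2) ee unfolding orthonormal_def by auto
    next
      fix b c assume bc: "b \<in> insert e B" "c \<in> insert e B" "b \<noteq> c"
      show "cinner b c = 0"
      proof (cases "b = e")
        case True then show ?thesis using bc e_orth by auto
      next
        case False
        show ?thesis
        proof (cases "c = e")
          case True
          then have "cinner b c = cnj (cinner e b)" by (simp add: cinner_commute[of e b])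
          then show ?thesis using False bc e_orth by auto
        next
          case False
          then show ?thesis using \<open>b \<noteq> e\<close> bc B(2) unfolding orthonormal_def by auto
        qed
      qed
    qed
    have ye: "y = r *s e" unfolding e_def using r0 by (simp add: vector_smult_assoc)
    have xs: "x = r *s e + s" using ye y_def by (metis diff_add_cancel)
    have "vec.span (insert e B) = vec.span (insert x A)"
      unfolding vec.span_insert B(3)[symmetric]
    proof (intro Collect_cong iffI)
      fix z assume "\<exists>k. z - k *s e \<in> vec.span B"
      then obtain k where k: "z - k *s e \<in> vec.span B" by blast
      have "(k / r) *s x = k *s e + (k / r) *s s"
        unfolding xs vector_add_ldistrib vector_smult_assoc using r0 by simp
      then have "z - (k / r) *s x = (z - k *s e) - (k / r) *s s"
        by (simp add: algebra_simps)
      also have "\<dots> \<in> vec.span B" by (rule vec.span_diff[OF k vec.span_scale[OF s_span]])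
      finally show "\<exists>k. z - k *s x \<in> vec.span B" by blast
    next
      fix z assume "\<exists>k. z - k *s x \<in> vec.span B"
      then obtain k where k: "z - k *s x \<in> vec.span B" by blast
      have "k *s x = (k * r) *s e + k *s s"
        unfolding xs vector_add_ldistrib vector_smult_assoc by simp
      then have "z - (k * r) *s e = (z - k *s x) + k *s s"
        by (simp add: algebra_simps)
      also have "\<dots> \<in> vec.span B" by (rule vec.span_add[OF k vec.span_scale[OF s_span]])
      finally show "\<exists>k. z - k *s e \<in> vec.span B" by blast
    qed
    then show ?thesis using ON B(1) by (intro exI[of _ "insert e B"]) auto
  qed
qed



lemma cinner_axis: "cinner (axis k 1) u = cnj (u $ k)"
proof -
  have "cinner (axis k 1) u = (\<Sum>i\<in>UNIV. if i = k then cnj (u $ i) else 0)"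
    unfolding cinner_def axis_def by (rule sum.cong) auto
  then show ?thesis by simp
qed

lemma trace_zero:
  assumes "\<And>f. (\<Sum>j\<in>J. cinner f (u j) *s w j) = 0" "finite J"
  shows "(\<Sum>j\<in>J. cinner (w j) (u j)) = 0"
proof -
  have "(\<Sum>j\<in>J. cinner (w j) (u j)) = (\<Sum>j\<in>J. \<Sum>k\<in>UNIV. w j $ k * cnj (u j $ k))"
    by (simp add: cinner_def)
  also have "\<dots> = (\<Sum>k\<in>UNIV. \<Sum>j\<in>J. w j $ k * cnj (u j $ k))"
    by (rule sum.swap)
  also have "\<dots> = (\<Sum>k\<in>UNIV. (\<Sum>j\<in>J. cinner (axis k 1) (u j) *s w j) $ k)"
    by (simp add: cinner_axis mult.commute)
  also have "\<dots> = 0" by (simp add: assms(1))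
  finally show ?thesis .
qed

lemma cmod_add_sq: "(cmod (x + y))\<^sup>2 = (cmod x)\<^sup>2 + (cmod y)\<^sup>2 + 2 * Re (x * cnj y)"
  unfolding cmod_power2 by (simp add: power2_eq_square algebra_simps)

lemma cinner_neg_left: "cinner (- x) y = - cinner x y"
  by (simp add: cinner_def sum_negf)

lemma corth_memI: "(\<And>x. x \<in> W \<Longrightarrow> cinner a x = 0) \<Longrightarrow> a \<in> corth W"
  by (simp add: corth_def)

lemma corth_memD: "a \<in> corth W \<Longrightarrow> x \<in> W \<Longrightarrow> cinner a x = 0"
  by (simp add: corth_def)



theorem proposition3p3:
  fixes W V :: "(complex ^ 'n) set" and w v :: "nat \<Rightarrow> complex ^ 'n" and N :: nat
  assumes "vec.subspace W" and "vec.subspace V"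
    and "direct_sum_univ W (corth V)"
    and "is_frame w N W"
    and "oblique_dual_frame v w N W V"
  shows "(\<Sum>i\<in>{1..N}. \<Sum>j\<in>{1..N}. (cmod (cinner (w i) (v j)))\<^sup>2) \<ge> real (vec.dim W)
    \<and> ((\<Sum>i\<in>{1..N}. \<Sum>j\<in>{1..N}. (cmod (cinner (w i) (v j)))\<^sup>2) = real (vec.dim W)
        \<longleftrightarrow> (\<forall>j\<in>{1..N}. v j = oblique_proj V (corth W)
                 (moore_penrose (frame_operator w N) *v w j)))"
proof -
  define I where "I = {1..N}"
  have finI: "finite I" by (simp add: I_def)
  define S where "S = frame_operator w N"
  have subW: "vec.subspace W" and subV: "vec.subspace V" by fact+
  have wW: "w i \<in> W" if "i \<in> I" for i using assms(4) that unfolding is_frame_def I_def by auto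
  have Wspan: "W = vec.span (w ` I)" using assms(4) unfolding is_frame_def I_def by auto
  have vV: "v i \<in> V" if "i \<in> I" for i using assms(5) that
    unfolding oblique_dual_frame_def is_frame_def I_def by auto
  have dual: "oblique_proj W (corth V) f = (\<Sum>i\<in>I. cinner f (v i) *s w i)" for f
    using assms(5) unfolding oblique_dual_frame_def I_def by auto
  have ds0: "a = 0" if "a \<in> W" "a \<in> corth V" for a
    using assms(3) that unfolding direct_sum_univ_def by blast
  have dsdec: "\<exists>a\<in>W. \<exists>b\<in>corth V. f = a + b" for f
    using assms(3) unfolding direct_sum_univ_def by blast
  have Sv: "S *v f = (\<Sum>i\<in>I. cinner f (w i) *s w i)" for f
    unfolding S_def I_def by (rule frame_op_mv)
  have Pid: "(\<Sum>i\<in>I. cinner x (v i) *s w i) = x" if "x \<in> W" for x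
  proof -
    have "oblique_proj W (corth V) x = x"
      unfolding oblique_proj_def
    proof (rule the_equality)
      show "x \<in> W \<and> x - x \<in> corth V" using that by (simp add: corth_def)
    next
      fix a assume a: "a \<in> W \<and> x - a \<in> corth V"
      then have "x - a \<in> W" using that subW by (simp add: vec.subspace_diff)
      then have "x - a = 0" using ds0 a by blast
      then show "a = x" by simp
    qed
    then show ?thesis using dual[of x] by simp
  qed
  have PW: "(\<Sum>i\<in>I. cinner f (v i) *s w i) \<in> W" for f
    using subW wW by (intro vec.subspace_sum vec.subspace_scale) auto
  have VWo: "a = 0" if "a \<in> V" "a \<in> corth W" for a
  proof -
    obtain p q where pq: "p \<in> W" "q \<in> corth V" "a = p + q" using dsdec by blast
    have "cinner a p = 0" using that(2) pq(1) by (rule corth_memD)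
    moreover have "cinner q a = 0" using pq(2) that(1) by (rule corth_memD)
    then have "cinner a q = 0" by (simp add: cinner_commute[of a q])
    ultimately have "cinner a a = 0" using pq(3) by (simp add: cinner_add_right)
    then show ?thesis by simp
  qed
  define Q where "Q f = (\<Sum>i\<in>I. cinner f (w i) *s v i)" for f
  have QV: "Q f \<in> V" for f
    unfolding Q_def using subV vV by (intro vec.subspace_sum vec.subspace_scale) auto
  have Qorth: "cinner (Q f) x = cinner f x" if "x \<in> W" for f x
  proof -
    have "cinner (Q f) x = (\<Sum>i\<in>I. cinner f (w i) * cinner (v i) x)"
      unfolding Q_def by (simp add: cinner_sum_left cinner_scale_left)
    also have "\<dots> = (\<Sum>i\<in>I. cnj (cinner x (v i)) * cinner f (w i))"
      by (simp add: cinner_commute[of x] mult.commute)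
    also have "\<dots> = cinner f (\<Sum>i\<in>I. cinner x (v i) *s w i)"
      by (simp add: cinner_sum_right cinner_scale_right)
    also have "\<dots> = cinner f x" using Pid[OF that] by simp
    finally show ?thesis .
  qed
  have QP: "cinner f (Q g) = cinner (\<Sum>i\<in>I. cinner f (v i) *s w i) g" for f g
    unfolding Q_def
    by (simp add: cinner_sum_left cinner_sum_right cinner_scale_left cinner_scale_right
        cinner_commute[of g] mult.commute)
  have obl: "oblique_proj V (corth W) f = Q f" for f
    unfolding oblique_proj_def
  proof (rule the_equality)
    show "Q f \<in> V \<and> f - Q f \<in> corth W"
      using QV Qorth by (auto intro!: corth_memI simp: cinner_diff_left)
  next
    fix a assume a: "a \<in> V \<and> f - a \<in> corth W"
    have "a - Q f \<in> V" using a QV subV by (simp add: vec.subspace_diff)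
    moreover have "a - Q f \<in> corth W"
    proof (rule corth_memI)
      fix x assume x: "x \<in> W"
      have "cinner (f - a) x = 0" using a x by (blast intro: corth_memD)
      then show "cinner (a - Q f) x = 0" using Qorth[OF x, of f]
        by (simp add: cinner_diff_left)
    qed
    ultimately show "a = Q f" using VWo by force
  qed
  have SW: "S *v f \<in> W" for f
    unfolding Sv Wspan by (intro vec.span_sum vec.span_scale vec.span_base) auto
  have Sorth: "S *v f = 0" if "f \<in> corth W" for f
  proof -
    have "cinner f (w i) = 0" if "i \<in> I" for i using \<open>f \<in> corth W\<close> wW[OF that] by (rule corth_memD)
    then show ?thesis unfolding Sv by simp
  qed
  have Sinj: "u = 0" if "u \<in> W" "S *v u = 0" for u
  proof -
    have "cinner (S *v u) u = (\<Sum>i\<in>I. cinner u (w i) * cinner (w i) u)"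
      unfolding Sv by (simp add: cinner_sum_left cinner_scale_left)
    also have "\<dots> = (\<Sum>i\<in>I. complex_of_real ((cmod (cinner u (w i)))\<^sup>2))"
    proof (rule sum.cong[OF refl])
      fix i show "cinner u (w i) * cinner (w i) u = complex_of_real ((cmod (cinner u (w i)))\<^sup>2)"
        by (subst complex_norm_square) (simp add: cinner_commute[of "w i" u])
    qed
    also have "\<dots> = complex_of_real (\<Sum>i\<in>I. (cmod (cinner u (w i)))\<^sup>2)"
      by simp
    finally have "complex_of_real (\<Sum>i\<in>I. (cmod (cinner u (w i)))\<^sup>2) = 0"
      using that(2) by (metis cinner_zero_left)
    then have "(\<Sum>i\<in>I. (cmod (cinner u (w i)))\<^sup>2) = 0" by (simp only: of_real_eq_0_iff)
    then have "\<forall>i\<in>I. (cmod (cinner u (w i)))\<^sup>2 = 0"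
      using finI by (subst sum_nonneg_eq_0_iff[symmetric]) auto
    then have "cinner u b = 0" if "b \<in> w ` I" for b using that by auto
    then have "cinner u u = 0" using orth_span that(1) Wspan by blast
    then show ?thesis by simp
  qed
  have SH: "cadjoint S = S"
  proof (rule hermitian_I)
    fix x y
    show "cinner (S *v x) y = cinner x (S *v y)"
      unfolding Sv
      by (simp add: cinner_sum_left cinner_sum_right cinner_scale_left cinner_scale_right
          cinner_commute[of y] mult.commute)
  qed
  obtain B where B: "finite B" "orthonormal B" "vec.span B = vec.span (w ` I)"
    using gram_schmidt[of "w ` I"] finI by auto
  have BspanW: "vec.span B = W" using B(3) Wspan by simp
  have dimW: "vec.dim W = card B"
    using vec.dim_span_eq_card_independent[OF orthonormal_independent[OF B(2,1)]] BspanW by simp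
  have BW: "b \<in> W" if "b \<in> B" for b using that BspanW vec.span_base by blast
  define Pm where "Pm = (\<Sum>b\<in>B. outer b b)"
  have Pmv: "Pm *v f = (\<Sum>b\<in>B. cinner f b *s b)" for f
    unfolding Pm_def by (simp add: sum_mv outer_mv)
  have PmW: "Pm *v f \<in> W" for f
    unfolding Pmv BspanW[symmetric] by (intro vec.span_sum vec.span_scale vec.span_base)
  have Pmorth: "f - Pm *v f \<in> corth W" for f
  proof (rule corth_memI)
    fix x assume "x \<in> W"
    have "cinner (f - Pm *v f) b = 0" if "b \<in> B" for b
      unfolding Pmv cinner_diff_left ortho_coeff[OF B(2,1) that] by simp
    then show "cinner (f - Pm *v f) x = 0" using orth_span \<open>x \<in> W\<close> BspanW by blast
  qed
  have Pmid: "Pm *v x = x" if "x \<in> W" for x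
    unfolding Pmv using orthonormal_expand[OF B(2,1)] that BspanW by simp
  have PmH: "cadjoint Pm = Pm"
  proof (rule hermitian_I)
    fix x y
    show "cinner (Pm *v x) y = cinner x (Pm *v y)"
      unfolding Pmv
      by (simp add: cinner_sum_left cinner_sum_right cinner_scale_left cinner_scale_right
          cinner_commute[of y] mult.commute)
  qed
  have WWo: "a = 0" if "a \<in> W" "a \<in> corth W" for a
    using corth_memD[OF that(2) that(1)] by simp
  define M where "M = S + mat 1 - Pm"
  have Mv: "M *v f = S *v f + (f - Pm *v f)" for f
    unfolding M_def by (simp add: matrix_vector_mult_add_rdistrib matrix_vector_mult_diff_rdistrib)
  have M0: "f = 0" if "M *v f = 0" for f
  proof -
    have e: "S *v f = - (f - Pm *v f)" using that Mv[of f] by (simp only: eq_neg_iff_add_eq_0)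
    have "- (f - Pm *v f) \<in> corth W"
    proof (rule corth_memI)
      fix x assume "x \<in> W"
      then have "cinner (f - Pm *v f) x = 0" by (rule corth_memD[OF Pmorth])
      then show "cinner (- (f - Pm *v f)) x = 0" by (simp only: cinner_neg_left minus_zero)
    qed
    then have "S *v f \<in> corth W" using e by simp
    then have "cinner (S *v f) (S *v f) = 0" using SW by (blast intro: corth_memD)
    then have Sf0: "S *v f = 0" by simp
    then have "f - Pm *v f = 0" using e by simp
    then have "f \<in> W" using PmW[of f] by simp
    then show ?thesis using Sinj Sf0 by blast
  qed
  have "inj ((*v) M)"
  proof (rule injI)
    fix x y assume "M *v x = M *v y"
    then have "M *v (x - y) = 0" by (simp add: matrix_vector_mult_diff_distrib)
    then show "x = y" using M0 by force
  qed
  then have Msurj: "surj ((*v) M)"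
    by (intro vec.linear_inj_imp_surj matrix_vector_mul_linear_gen)
  have Ssurj: "\<exists>y\<in>W. S *v y = b" if "b \<in> W" for b
  proof -
    obtain f where f: "M *v f = b" using Msurj by (metis surjD)
    have "b - S *v f \<in> W" using that SW subW by (simp add: vec.subspace_diff)
    moreover have "b - S *v f = f - Pm *v f" using f Mv[of f] by (metis add_diff_cancel_left')
    ultimately have "f - Pm *v f = 0" using Pmorth[of f] WWo by metis
    then have "S *v (Pm *v f) = S *v f" by (metis diff_self eq_iff_diff_eq_0)
    moreover have "S *v f = b" using f Mv[of f] \<open>f - Pm *v f = 0\<close> by simp
    ultimately show ?thesis using PmW by blast
  qed
  obtain g where g: "\<forall>b\<in>B. g b \<in> W \<and> S *v g b = b"
    using bchoice[of B "\<lambda>b y. y \<in> W \<and> S *v y = b"] Ssurj BW by blast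
  define X where "X = (\<Sum>b\<in>B. outer (g b) b)"
  have Xv: "X *v f = (\<Sum>b\<in>B. cinner f b *s g b)" for f
    unfolding X_def by (simp add: sum_mv outer_mv)
  have XW: "X *v f \<in> W" for f
    unfolding Xv using subW g by (intro vec.subspace_sum vec.subspace_scale) auto
  have SX: "S ** X = Pm"
    unfolding matrix_eq
  proof
    fix f
    have "(S ** X) *v f = (\<Sum>b\<in>B. cinner f b *s (S *v g b))"
      by (simp add: matrix_vector_mul_assoc[symmetric] Xv mv_sum mv_scale)
    also have "\<dots> = Pm *v f" unfolding Pmv using g by (intro sum.cong) auto
    finally show "(S ** X) *v f = Pm *v f" .
  qed
  have SPm: "S *v (Pm *v f) = S *v f" for f
  proof -
    have "S *v (f - Pm *v f) = 0" by (rule Sorth[OF Pmorth])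
    then show ?thesis by (simp add: matrix_vector_mult_diff_distrib)
  qed
  have XS: "X ** S = Pm"
    unfolding matrix_eq
  proof
    fix f
    define z where "z = X *v (S *v f) - Pm *v f"
    have "z \<in> W" unfolding z_def using XW PmW subW by (simp add: vec.subspace_diff)
    moreover have "S *v z = 0"
    proof -
      have "S *v z = S *v (X *v (S *v f)) - S *v (Pm *v f)"
        by (simp only: z_def matrix_vector_mult_diff_distrib)
      also have "\<dots> = (S ** X) *v (S *v f) - S *v (Pm *v f)"
        by (simp only: matrix_vector_mul_assoc[symmetric])
      also have "\<dots> = 0" unfolding SX SPm using Pmid[OF SW] by simp
      finally show ?thesis .
    qed
    ultimately have "z = 0" by (rule Sinj)
    then show "(X ** S) *v f = Pm *v f"
      by (simp add: z_def matrix_vector_mul_assoc[symmetric])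
  qed
  have MP: "moore_penrose S = X"
  proof (rule mp_eq)
    show "S ** X ** S = S" unfolding SX matrix_eq
      by (simp add: matrix_vector_mul_assoc[symmetric] Pmid[OF SW])
    show "X ** S ** X = X" unfolding XS matrix_eq
      by (simp add: matrix_vector_mul_assoc[symmetric] Pmid[OF XW])
    show "cadjoint (S ** X) = S ** X" unfolding SX by (rule PmH)
    show "cadjoint (X ** S) = X ** S" unfolding XS by (rule PmH)
  qed
  have SXadj: "S ** cadjoint X = Pm"
    using cadjoint_mult[of X S] XS PmH SH by simp
  define v0 where "v0 j = Q (X *v w j)" for j
  have obl_eq: "oblique_proj V (corth W) (moore_penrose (frame_operator w N) *v w j) = v0 j" for j
    unfolding MP[unfolded S_def] obl v0_def ..
  define c where "c i j = cinner (w i) (X *v w j)" for i j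
  define u where "u j = v j - v0 j" for j
  define b where "b i j = cinner (w i) (u j)" for i j
  have c_eq: "cinner (w i) (v0 j) = c i j" if "i \<in> I" for i j
  proof -
    have "cinner (v0 j) (w i) = cinner (X *v w j) (w i)"
      unfolding v0_def by (rule Qorth[OF wW[OF that]])
    then show ?thesis unfolding c_def by (metis cinner_commute)
  qed
  have a_eq: "cinner (w i) (v j) = c i j + b i j" if "i \<in> I" for i j
    using c_eq[OF that, of j] unfolding b_def u_def cinner_diff_right by simp
  have Swj: "S *v (X *v w j) = w j" if "j \<in> I" for j
    using Pmid[OF wW[OF that]] SX by (simp add: matrix_vector_mul_assoc)
  have cross1: "(\<Sum>i\<in>I. c i j * cnj (b i j)) = cinner (u j) (w j)" if "j \<in> I" for j
  proof -
    have "cinner (u j) (S *v (X *v w j)) = (\<Sum>i\<in>I. cnj (cinner (X *v w j) (w i)) * cinner (u j) (w i))"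
      unfolding Sv by (simp add: cinner_sum_right cinner_scale_right)
    also have "\<dots> = (\<Sum>i\<in>I. c i j * cnj (b i j))"
      unfolding c_def b_def by (simp add: cinner_commute[of "w _" "X *v w j"] cinner_commute[of "w _" "u j"])
    finally show ?thesis using Swj[OF that] by simp
  qed
  have dualv0: "(\<Sum>j\<in>I. cinner f (v0 j) *s w j) = (\<Sum>j\<in>I. cinner f (v j) *s w j)" for f
  proof -
    define p where "p = (\<Sum>i\<in>I. cinner f (v i) *s w i)"
    have "(\<Sum>j\<in>I. cinner f (v0 j) *s w j) = (\<Sum>j\<in>I. cinner (cadjoint X *v p) (w j) *s w j)"
      unfolding v0_def QP p_def cinner_adj2 ..
    also have "\<dots> = S *v (cadjoint X *v p)" unfolding Sv ..
    also have "\<dots> = Pm *v p" by (simp add: matrix_vector_mul_assoc SXadj)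
    also have "\<dots> = p" unfolding p_def by (rule Pmid[OF PW])
    finally show ?thesis unfolding p_def .
  qed
  have dualu: "(\<Sum>j\<in>I. cinner f (u j) *s w j) = 0" for f
  proof -
    have "(\<Sum>j\<in>I. cinner f (u j) *s w j) = (\<Sum>j\<in>I. cinner f (v j) *s w j) - (\<Sum>j\<in>I. cinner f (v0 j) *s w j)"
      unfolding u_def cinner_diff_right vector_sub_rdistrib sum_subtractf ..
    then show ?thesis using dualv0[of f] by simp
  qed
  have cross: "(\<Sum>i\<in>I. \<Sum>j\<in>I. c i j * cnj (b i j)) = 0"
  proof -
    have "(\<Sum>i\<in>I. \<Sum>j\<in>I. c i j * cnj (b i j)) = (\<Sum>j\<in>I. \<Sum>i\<in>I. c i j * cnj (b i j))"
      by (rule sum.swap)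
    also have "\<dots> = (\<Sum>j\<in>I. cinner (u j) (w j))" using cross1 by simp
    also have "\<dots> = cnj (\<Sum>j\<in>I. cinner (w j) (u j))" by (simp add: cinner_commute[of "u _"])
    also have "\<dots> = 0" using trace_zero[OF dualu finI] by simp
    finally show ?thesis .
  qed
  have trXw: "(\<Sum>j\<in>I. cinner (X *v w j) (w j)) = of_nat (card B)"
  proof -
    have "(\<Sum>j\<in>I. cinner (X *v w j) (w j)) = (\<Sum>j\<in>I. \<Sum>bb\<in>B. cinner bb (w j) * cinner (X *v w j) bb)"
    proof (rule sum.cong[OF refl])
      fix j assume j: "j \<in> I"
      have "cinner (X *v w j) (w j) = cinner (X *v w j) (\<Sum>bb\<in>B. cinner (w j) bb *s bb)"
        using Pmid[OF wW[OF j]] unfolding Pmv by simp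
      also have "\<dots> = (\<Sum>bb\<in>B. cinner bb (w j) * cinner (X *v w j) bb)"
        by (simp add: cinner_sum_right cinner_scale_right cinner_commute[of bb "w j" for bb])
      finally show "cinner (X *v w j) (w j) = (\<Sum>bb\<in>B. cinner bb (w j) * cinner (X *v w j) bb)" .
    qed
    also have "\<dots> = (\<Sum>bb\<in>B. \<Sum>j\<in>I. cinner bb (w j) * cinner (X *v w j) bb)"
      by (rule sum.swap)
    also have "\<dots> = (\<Sum>bb\<in>B. cinner (X *v (S *v bb)) bb)"
      unfolding Sv by (simp add: mv_sum mv_scale cinner_sum_left cinner_scale_left)
    also have "\<dots> = (\<Sum>bb\<in>B. 1)"
    proof (rule sum.cong[OF refl])
      fix bb assume bb: "bb \<in> B"
      have "X *v (S *v bb) = bb" using XS Pmid[OF BW[OF bb]] by (simp add: matrix_vector_mul_assoc)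
      then show "cinner (X *v (S *v bb)) bb = 1" using B(2) bb unfolding orthonormal_def by simp
    qed
    finally show ?thesis by simp
  qed
  have sumc: "(\<Sum>i\<in>I. \<Sum>j\<in>I. (cmod (c i j))\<^sup>2) = real (card B)"
  proof -
    have "complex_of_real (\<Sum>i\<in>I. \<Sum>j\<in>I. (cmod (c i j))\<^sup>2) = (\<Sum>i\<in>I. \<Sum>j\<in>I. c i j * cnj (c i j))"
      by (simp only: of_real_sum complex_norm_square)
    also have "\<dots> = (\<Sum>j\<in>I. \<Sum>i\<in>I. c i j * cnj (c i j))" by (rule sum.swap)
    also have "\<dots> = (\<Sum>j\<in>I. cinner (X *v w j) (S *v (X *v w j)))"
    proof (rule sum.cong[OF refl])
      fix j
      show "(\<Sum>i\<in>I. c i j * cnj (c i j)) = cinner (X *v w j) (S *v (X *v w j))"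
        unfolding Sv c_def
        by (simp add: cinner_sum_right cinner_scale_right cinner_commute[of "w _" "X *v w j"] mult.commute)
    qed
    also have "\<dots> = (\<Sum>j\<in>I. cinner (X *v w j) (w j))" using Swj by simp
    also have "\<dots> = complex_of_real (real (card B))" using trXw by simp
    finally show ?thesis by (simp only: of_real_eq_iff)
  qed
  have decomp: "(\<Sum>i\<in>I. \<Sum>j\<in>I. (cmod (cinner (w i) (v j)))\<^sup>2)
      = real (card B) + (\<Sum>i\<in>I. \<Sum>j\<in>I. (cmod (b i j))\<^sup>2)"
  proof -
    have "(\<Sum>i\<in>I. \<Sum>j\<in>I. (cmod (cinner (w i) (v j)))\<^sup>2)
        = (\<Sum>i\<in>I. \<Sum>j\<in>I. (cmod (c i j))\<^sup>2 + (cmod (b i j))\<^sup>2 + 2 * Re (c i j * cnj (b i j)))"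
      using a_eq by (simp add: cmod_add_sq)
    also have "\<dots> = (\<Sum>i\<in>I. \<Sum>j\<in>I. (cmod (c i j))\<^sup>2) + (\<Sum>i\<in>I. \<Sum>j\<in>I. (cmod (b i j))\<^sup>2)
        + 2 * Re (\<Sum>i\<in>I. \<Sum>j\<in>I. c i j * cnj (b i j))"
      by (simp add: sum.distrib sum_distrib_left)
    also have "\<dots> = real (card B) + (\<Sum>i\<in>I. \<Sum>j\<in>I. (cmod (b i j))\<^sup>2)"
      using sumc cross by simp
    finally show ?thesis .
  qed
  have bnn: "(\<Sum>i\<in>I. \<Sum>j\<in>I. (cmod (b i j))\<^sup>2) \<ge> 0" by (intro sum_nonneg) auto
  have b0_iff: "(\<Sum>i\<in>I. \<Sum>j\<in>I. (cmod (b i j))\<^sup>2) = 0 \<longleftrightarrow> (\<forall>j\<in>I. u j = 0)"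
  proof
    assume h: "(\<Sum>i\<in>I. \<Sum>j\<in>I. (cmod (b i j))\<^sup>2) = 0"
    have "\<forall>i\<in>I. (\<Sum>j\<in>I. (cmod (b i j))\<^sup>2) = 0"
      using h finI by (subst sum_nonneg_eq_0_iff[symmetric]) (auto intro: sum_nonneg)
    then have bz: "b i j = 0" if "i \<in> I" "j \<in> I" for i j
      using that finI by (auto simp: sum_nonneg_eq_0_iff)
    show "\<forall>j\<in>I. u j = 0"
    proof
      fix j assume j: "j \<in> I"
      have hb: "cinner (u j) x = 0" if "x \<in> w ` I" for x
        using that bz[OF _ j] unfolding b_def by (auto simp: cinner_commute[of "u j"])
      have "cinner (u j) x = 0" if "x \<in> W" for x
        using orth_span[of "w ` I" "u j" x, OF hb] that Wspan by blast
      then have "u j \<in> corth W" by (rule corth_memI)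
      moreover have "u j \<in> V" unfolding u_def using vV[OF j] QV subV
        by (simp add: v0_def vec.subspace_diff)
      ultimately show "u j = 0" using VWo by blast
    qed
  next
    assume "\<forall>j\<in>I. u j = 0"
    then show "(\<Sum>i\<in>I. \<Sum>j\<in>I. (cmod (b i j))\<^sup>2) = 0" unfolding b_def by simp
  qed
  have "(\<forall>j\<in>I. u j = 0) \<longleftrightarrow> (\<forall>j\<in>I. v j = oblique_proj V (corth W)
                 (moore_penrose (frame_operator w N) *v w j))"
    unfolding obl_eq u_def by simp
  then show ?thesis using decomp bnn b0_iff dimW unfolding I_def by auto
qed

end
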